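(* Let $R$ be a diagonally convex polyomino with at least three diagonals, let $m$ be the largest index $n$ such that $R$ has a cell on the $n$-th diagonal, and let $Q$ be the set of cells of $R$ not on the $m$-th diagonal. Then exactly one connected component (under edge-adjacency) of $Q$ has cells on at least two diagonals, this component is a diagonally convex polyomino, and every other connected component of $Q$ consists of a single cell lying on the $(m-1)$-th diagonal.
   Context: A cell is a closed unit square $[i,i+1]\times[j,j+1]$ with $i,j\in\mathbb{Z}$; we identify it with $(i,j)$; two cells are edge-adjacent if they share an edge. A polyomino is a finite nonempty set of cells connected under edge-adjacency. The $n$-th diagonal is the set of cells $(i,j)$ with $i+j=n$. A polyomino is diagonally convex if for every $n$ its cells on the $n$-th diagonal are of the form $(i,n-i)$ with $i$ ranging over an interval of integers. The number of diagonals of a polyomino is the number of $n$ for which it has a cell on the $n$-th diagonal. *)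

theory Defs
  imports Main
begin

text \<open>A cell (i,j) stands for the unit square [i,i+1] x [j,j+1].\<close>
type_synonym cell = "int \<times> int"

definition edge_adj :: "cell \<Rightarrow> cell \<Rightarrow> bool" where
  "edge_adj a b \<longleftrightarrow> \<bar>fst a - fst b\<bar> + \<bar>snd a - snd b\<bar> = 1"

definition diag :: "cell \<Rightarrow> int" where
  "diag c = fst c + snd c"

definition reach_in :: "cell set \<Rightarrow> cell \<Rightarrow> cell \<Rightarrow> bool" where
  "reach_in S = (\<lambda>x y. x \<in> S \<and> y \<in> S \<and> edge_adj x y)\<^sup>*\<^sup>*"

definition cells_connected :: "cell set \<Rightarrow> bool" where
  "cells_connected S \<longleftrightarrow> (\<forall>a\<in>S. \<forall>b\<in>S. reach_in S a b)"

definition polyomino :: "cell set \<Rightarrow> bool" where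
  "polyomino S \<longleftrightarrow> finite S \<and> S \<noteq> {} \<and> cells_connected S"

definition is_component :: "cell set \<Rightarrow> cell set \<Rightarrow> bool" where
  "is_component Q C \<longleftrightarrow> (\<exists>a\<in>Q. C = {b \<in> Q. reach_in Q a b})"

definition diag_convex :: "cell set \<Rightarrow> bool" where
  "diag_convex S \<longleftrightarrow>
     (\<forall>n i j k. (i, n - i) \<in> S \<longrightarrow> (k, n - k) \<in> S \<longrightarrow> i \<le> j \<longrightarrow> j \<le> k
        \<longrightarrow> (j, n - j) \<in> S)"

definition num_diagonals :: "cell set \<Rightarrow> nat" where
  "num_diagonals S = card (diag ` S)"

end

theory Submission
  imports Defs
begin

lemma adj_sym: "edge_adj a b \<Longrightarrow> edge_adj b a"
  unfolding edge_adj_def by arith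

lemma adj_diag: "edge_adj a b \<Longrightarrow> diag b = diag a + 1 \<or> diag b = diag a - 1"
  unfolding edge_adj_def diag_def by arith

lemma cell_eq: "c = (fst c, diag c - fst c)"
  by (simp add: diag_def)

lemma reach_refl: "reach_in S x x"
  by (simp add: reach_in_def)

lemma reach_step: "reach_in S x y \<Longrightarrow> y\<in>S \<Longrightarrow> z\<in>S \<Longrightarrow> edge_adj y z \<Longrightarrow> reach_in S x z"
  unfolding reach_in_def by (rule rtranclp.rtrancl_into_rtrancl) auto

lemma reach_trans: "reach_in S x y \<Longrightarrow> reach_in S y z \<Longrightarrow> reach_in S x z"
  unfolding reach_in_def by (rule rtranclp_trans)

lemma reach_sym: "reach_in S x y \<Longrightarrow> reach_in S y x"
  unfolding reach_in_def
proof (induction rule: rtranclp_induct)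
  case base then show ?case by simp
next
  case (step y z)
  then have "edge_adj z y" using adj_sym by blast
  then show ?case
    using step by (auto intro: converse_rtranclp_into_rtranclp)
qed

lemma reach_last: "reach_in S x y \<Longrightarrow> x \<noteq> y \<Longrightarrow> \<exists>w\<in>S. y\<in>S \<and> edge_adj w y \<and> reach_in S x w"
  unfolding reach_in_def by (erule rtranclp.cases) auto

lemma reach_first: "reach_in S x y \<Longrightarrow> x \<noteq> y \<Longrightarrow> \<exists>w\<in>S. x\<in>S \<and> edge_adj x w \<and> reach_in S w y"
  unfolding reach_in_def by (erule converse_rtranclpE) auto

lemma conv_use: "diag_convex S \<Longrightarrow> a \<in> S \<Longrightarrow> b \<in> S \<Longrightarrow> diag a = n \<Longrightarrow> diag b = n
  \<Longrightarrow> fst a \<le> j \<Longrightarrow> j \<le> fst b \<Longrightarrow> (j, n - j) \<in> S"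
  unfolding diag_convex_def
  by (metis cell_eq)

locale dc =
  fixes R :: "cell set" and m :: int and Q :: "cell set"
  assumes poly: "polyomino R" and conv: "diag_convex R"
    and mdef: "m = Max (diag ` R)" and Qdef: "Q = {c \<in> R. diag c \<noteq> m}"
begin

lemma finR: "finite R" using poly by (simp add: polyomino_def)
lemma conn: "cells_connected R" using poly by (simp add: polyomino_def)

lemma le_m: "c \<in> R \<Longrightarrow> diag c \<le> m"
  using mdef finR by (simp add: Max_ge)

lemma QR: "c \<in> Q \<Longrightarrow> c \<in> R \<and> diag c \<le> m - 1"
proof -
  assume "c \<in> Q"
  then have "c \<in> R" "diag c \<noteq> m" using Qdef by auto
  then show ?thesis using le_m[of c] by auto
qed

lemma inQ: "c \<in> R \<Longrightarrow> diag c \<noteq> m \<Longrightarrow> c \<in> Q"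
  using Qdef by simp

lemma nbr:
  assumes "reach_in Q x u" "diag x \<le> m - 2" "diag u = m - 1"
  shows "\<exists>w\<in>R. diag w = m - 2 \<and> edge_adj u w"
proof -
  have "x \<noteq> u" using assms by auto
  then obtain w where w: "w \<in> Q" "edge_adj w u" using reach_last assms(1) by blast
  have "diag w = m - 2" using adj_diag[OF w(2)] QR[OF w(1)] assms(3) by auto
  then show ?thesis using w QR adj_sym by blast
qed

lemma zig:
  assumes u: "u\<in>R" "diag u = m-1" and w: "w\<in>R" "diag w = m-2" "edge_adj u w"
    and v: "v\<in>R" "diag v = m-1" and w': "w'\<in>R" "diag w' = m-2" "edge_adj v w'"
    and le: "fst u \<le> fst v"
  shows "\<forall>j. fst u \<le> j \<and> j \<le> fst v \<longrightarrow> reach_in Q u (j, m-1-j)"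
proof -
  have fw: "fst u - 1 \<le> fst w \<and> fst w \<le> fst u"
    using w(3) u(2) w(2) unfolding edge_adj_def diag_def by arith
  have fw': "fst v - 1 \<le> fst w' \<and> fst w' \<le> fst v"
    using w'(3) v(2) w'(2) unfolding edge_adj_def diag_def by arith
  have main: "\<forall>k::nat. fst u + int k \<le> fst v \<longrightarrow> reach_in Q u (fst u + int k, m-1-(fst u + int k))"
  proof
    fix k :: nat
    show "fst u + int k \<le> fst v \<longrightarrow> reach_in Q u (fst u + int k, m-1-(fst u + int k))"
    proof (induction k)
      case 0
      have "(fst u, m - 1 - fst u) = u" using cell_eq[of u] u(2) by simp
      then show ?case by (simp add: reach_refl)
    next
      case (Suc k)
      show ?case
      proof
        assume a: "fst u + int (Suc k) \<le> fst v"
        define j where "j = fst u + int k"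
        have ih: "reach_in Q u (j, m-1-j)" using Suc a j_def by simp
        have c0: "(j, m-1-j) \<in> R"
          using conv_use[OF conv u(1) v(1) u(2) v(2)] j_def a by simp
        have c1: "(j, m-2-j) \<in> R"
          using conv_use[OF conv w(1) w'(1) w(2) w'(2)] j_def a fw fw' by simp
        have "fst u \<le> j+1" "j+1 \<le> fst v" using j_def a by auto
        from conv_use[OF conv u(1) v(1) u(2) v(2) this]
        have c2: "(j+1, m-1-(j+1)) \<in> R" .
        have q0: "(j, m-1-j) \<in> Q" using inQ[OF c0] by (simp add: diag_def)
        have q1: "(j, m-2-j) \<in> Q" using inQ[OF c1] by (simp add: diag_def)
        have q2: "(j+1, m-1-(j+1)) \<in> Q" using inQ[OF c2] by (simp add: diag_def)
        have "reach_in Q u (j, m-2-j)"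
          using reach_step[OF ih q0 q1] by (simp add: edge_adj_def)
        then have "reach_in Q u (j+1, m-1-(j+1))"
          using reach_step[OF _ q1 q2] by (simp add: edge_adj_def)
        then show "reach_in Q u (fst u + int (Suc k), m - 1 - (fst u + int (Suc k)))"
          using j_def by (simp add: ac_simps)
      qed
    qed
  qed
  show ?thesis
  proof (intro allI impI)
    fix j assume j: "fst u \<le> j \<and> j \<le> fst v"
    then have "fst u + int (nat (j - fst u)) = j" by simp
    then show "reach_in Q u (j, m-1-j)" using main[rule_format, of "nat (j - fst u)"] j by simp
  qed
qed

lemma zz:
  assumes u: "u\<in>R" "diag u = m-1" "\<exists>w\<in>R. diag w = m-2 \<and> edge_adj u w"
    and v: "v\<in>R" "diag v = m-1" "\<exists>w\<in>R. diag w = m-2 \<and> edge_adj v w"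
  shows "reach_in Q u v"
proof -
  obtain w where w: "w\<in>R" "diag w = m-2" "edge_adj u w" using u(3) by blast
  obtain w' where w': "w'\<in>R" "diag w' = m-2" "edge_adj v w'" using v(3) by blast
  show ?thesis
  proof (cases "fst u \<le> fst v")
    case True
    have "reach_in Q u (fst v, m-1-fst v)" using zig[OF u(1,2) w v(1,2) w' True, rule_format, of "fst v"] True by simp
    moreover have "(fst v, m-1-fst v) = v" using cell_eq[of v] v(2) by simp
    ultimately show ?thesis by simp
  next
    case False
    have "reach_in Q v (fst u, m-1-fst u)" using zig[OF v(1,2) w' u(1,2) w, rule_format, of "fst u"] False by simp
    moreover have "(fst u, m-1-fst u) = u" using cell_eq[of u] u(2) by simp
    ultimately show ?thesis using reach_sym by metis
  qed
qed

lemma CL: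
  assumes x: "x\<in>R" "diag x \<le> m-2" and y: "y\<in>R" "diag y \<le> m-2"
  shows "reach_in Q x y"
proof -
  have r: "(\<lambda>a b. a \<in> R \<and> b \<in> R \<and> edge_adj a b)\<^sup>*\<^sup>* x y"
    using conn x y unfolding cells_connected_def reach_in_def by blast
  have "(y\<in>Q \<and> reach_in Q x y) \<or> (m-1 \<le> diag y \<and> (\<exists>u\<in>Q. diag u = m-1 \<and> reach_in Q x u))"
    using r
  proof (induction rule: rtranclp_induct)
    case base
    then show ?case using inQ[OF x(1)] x(2) reach_refl by auto
  next
    case (step y z)
    have yR: "y \<in> R" and zR: "z \<in> R" and adj: "edge_adj y z" using step.hyps by auto
    have dz: "diag z = diag y + 1 \<or> diag z = diag y - 1" using adj_diag[OF adj] .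
    have ly: "diag y \<le> m" and lz: "diag z \<le> m" using le_m yR zR by auto
    consider "diag z = m" | "diag z = m - 1" | "diag z \<le> m - 2" using lz by linarith
    then show ?case
    proof cases
      case 1
      then have "diag y = m - 1" using dz ly by auto
      then show ?thesis using step.IH 1 by auto
    next
      case 2
      have zQ: "z \<in> Q" using inQ[OF zR] 2 by simp
      from step.IH show ?thesis
      proof
        assume "y \<in> Q \<and> reach_in Q x y"
        then show ?thesis using reach_step zQ adj by blast
      next
        assume "m-1 \<le> diag y \<and> (\<exists>u\<in>Q. diag u = m-1 \<and> reach_in Q x u)"
        then show ?thesis using 2 by auto
      qed
    next
      case 3
      have zQ: "z \<in> Q" using inQ[OF zR] 3 by simp
      have yQ: "y \<in> Q" using inQ[OF yR] 3 dz by auto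
      from step.IH show ?thesis
      proof
        assume "y \<in> Q \<and> reach_in Q x y"
        then show ?thesis using reach_step zQ adj by blast
      next
        assume h: "m-1 \<le> diag y \<and> (\<exists>u\<in>Q. diag u = m-1 \<and> reach_in Q x u)"
        then obtain u where u: "u \<in> Q" "diag u = m-1" "reach_in Q x u" by blast
        have dy: "diag y = m - 1" using h 3 dz by auto
        have dzz: "diag z = m - 2" using dy dz 3 by auto
        have "reach_in Q u y"
          using zz[OF QR[OF u(1), THEN conjunct1] u(2) nbr[OF u(3) x(2) u(2)] yR dy] zR dzz adj
          by blast
        then have "reach_in Q x y" using u(3) reach_trans by blast
        then show ?thesis using reach_step yQ zQ adj by blast
      qed
    qed
  qed
  then show ?thesis using y(2) by auto
qed

lemma nd2: "C \<subseteq> R \<Longrightarrow> a \<in> C \<Longrightarrow> b \<in> C \<Longrightarrow> diag a \<noteq> diag b \<Longrightarrow> num_diagonals C \<ge> 2"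
proof -
  assume h: "C \<subseteq> R" "a \<in> C" "b \<in> C" "diag a \<noteq> diag b"
  have "finite (diag ` C)" using h(1) finR finite_subset by blast
  moreover have "{diag a, diag b} \<subseteq> diag ` C" using h by auto
  ultimately have "card {diag a, diag b} \<le> card (diag ` C)" by (rule card_mono)
  then show ?thesis using h(4) by (simp add: num_diagonals_def)
qed

lemma result:
  assumes three: "num_diagonals R \<ge> 3"
  shows "(\<exists>!C. is_component Q C \<and> num_diagonals C \<ge> 2)
    \<and> (\<forall>C. is_component Q C \<and> num_diagonals C \<ge> 2 \<longrightarrow> polyomino C \<and> diag_convex C)
    \<and> (\<forall>C. is_component Q C \<and> \<not> num_diagonals C \<ge> 2 \<longrightarrow> (\<exists>c. C = {c} \<and> diag c = m - 1))"
proof -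
  have fD: "finite (diag ` R)" using finR by simp
  have "\<exists>d\<in>diag ` R. d \<le> m - 2"
  proof (rule ccontr)
    assume "\<not> ?thesis"
    then have "diag ` R \<subseteq> {m-1, m}" using le_m by force
    then have "card (diag ` R) \<le> card {m-1, m::int}" by (rule card_mono[rotated]) simp
    then show False using three by (simp add: num_diagonals_def)
  qed
  then obtain x0 where x0: "x0 \<in> R" "diag x0 \<le> m - 2" by blast
  have x0Q: "x0 \<in> Q" using inQ x0 by simp
  have "\<exists>d\<in>diag ` R. d \<noteq> diag x0"
  proof (rule ccontr)
    assume "\<not> ?thesis"
    then have "diag ` R \<subseteq> {diag x0}" by auto
    then have "card (diag ` R) \<le> card {diag x0}" by (rule card_mono[rotated]) simp
    then show False using three by (simp add: num_diagonals_def)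
  qed
  then obtain y0 where y0: "y0 \<in> R" "diag y0 \<noteq> diag x0" by blast
  have "reach_in R x0 y0" using conn x0 y0 unfolding cells_connected_def by blast
  then obtain w0 where w0: "w0 \<in> R" "edge_adj x0 w0" using reach_first y0 by blast
  have dw0: "diag w0 \<noteq> diag x0" "diag w0 \<le> m - 1" using adj_diag[OF w0(2)] x0 by auto
  have w0Q: "w0 \<in> Q" using inQ w0 dw0 by simp
  have rw0: "reach_in Q x0 w0" using reach_step[OF reach_refl x0Q w0Q w0(2)] .
  define C0 where "C0 = {b\<in>Q. reach_in Q x0 b}"
  have C0R: "C0 \<subseteq> R" using C0_def QR by auto
  have compC0: "is_component Q C0" using x0Q C0_def is_component_def by blast
  have ndC0: "num_diagonals C0 \<ge> 2"
    using nd2[OF C0R, of x0 w0] C0_def x0Q w0Q rw0 reach_refl dw0 by auto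
  have caseA: "{b\<in>Q. reach_in Q a b} = C0" if "reach_in Q x0 a" for a
    using that reach_trans reach_sym unfolding C0_def by blast
  have caseB: "{b\<in>Q. reach_in Q a b} = {a} \<and> diag a = m - 1"
    if a: "a \<in> Q" "\<not> reach_in Q x0 a" for a
  proof -
    have da: "diag a = m - 1"
    proof (rule ccontr)
      assume "diag a \<noteq> m - 1"
      then have da2: "diag a \<le> m - 2" using QR[OF a(1)] by auto
      have "reach_in Q x0 a" using CL[OF x0 _ da2] QR[OF a(1)] by simp
      then show False using a(2) by simp
    qed
    have "b = a" if b: "b \<in> Q" "reach_in Q a b" for b
    proof (rule ccontr)
      assume "b \<noteq> a"
      then obtain w where w: "w \<in> Q" "edge_adj a w" using reach_first[OF b(2)] by auto
      have "diag w = m - 2" using adj_diag[OF w(2)] QR[OF w(1)] da by auto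
      then have "reach_in Q x0 w" using CL[OF x0, of w] QR[OF w(1)] by simp
      then have "reach_in Q x0 a" using reach_step[OF _ w(1) a(1) adj_sym[OF w(2)]] by simp
      then show False using a(2) by simp
    qed
    then have "{b\<in>Q. reach_in Q a b} = {a}" using a(1) reach_refl[of Q a] by blast
    then show ?thesis using da by simp
  qed
  have comp_cases: "C = C0 \<or> (\<exists>c. C = {c} \<and> diag c = m - 1)" if comp: "is_component Q C" for C
  proof -
    obtain a where a: "a \<in> Q" "C = {b\<in>Q. reach_in Q a b}" using comp unfolding is_component_def by blast
    show ?thesis
    proof (cases "reach_in Q x0 a")
      case True then show ?thesis using caseA[OF True] a(2) by simp
    next
      case False
      have "C = {a} \<and> diag a = m - 1" using caseB[OF a(1) False] a(2) by simp
      then show ?thesis by blast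
    qed
  qed
  have single: "\<not> num_diagonals {c} \<ge> 2" for c by (simp add: num_diagonals_def)
  have P1: "\<exists>!C. is_component Q C \<and> num_diagonals C \<ge> 2"
  proof (rule ex1I[of _ C0])
    show "is_component Q C0 \<and> num_diagonals C0 \<ge> 2" using compC0 ndC0 by simp
  next
    fix C assume h: "is_component Q C \<and> num_diagonals C \<ge> 2"
    then show "C = C0" using comp_cases[of C] single by auto
  qed
  have polyC0: "polyomino C0"
  proof -
    have "finite C0" using C0R finR finite_subset by blast
    moreover have "C0 \<noteq> {}" using C0_def x0Q reach_refl by blast
    moreover have "cells_connected C0"
      unfolding cells_connected_def
    proof (intro ballI)
      fix a b assume a: "a \<in> C0" and b: "b \<in> C0"
      have rab: "reach_in Q a b" using a b C0_def reach_sym reach_trans by blast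
      have "(\<lambda>x y. x \<in> Q \<and> y \<in> Q \<and> edge_adj x y)\<^sup>*\<^sup>* a b" using rab reach_in_def by simp
      then have "reach_in C0 a b \<and> b \<in> C0"
      proof (induction rule: rtranclp_induct)
        case base then show ?case using a reach_refl by simp
      next
        case (step y z)
        then have "z \<in> C0" using C0_def reach_step by blast
        then show ?case using step reach_step by blast
      qed
      then show "reach_in C0 a b" by simp
    qed
    ultimately show ?thesis by (simp add: polyomino_def)
  qed
  have convC0: "diag_convex C0"
    unfolding diag_convex_def
  proof (intro allI impI)
    fix n i j k
    assume h: "(i, n - i) \<in> C0" "(k, n - k) \<in> C0" "i \<le> j" "j \<le> k"
    have iQ: "(i, n-i) \<in> Q" and kQ: "(k, n-k) \<in> Q" using h C0_def by auto
    have dn: "n \<le> m - 1" using QR[OF iQ] by (simp add: diag_def)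
    have jR: "(j, n-j) \<in> R"
      using conv h(3,4) QR[OF iQ] QR[OF kQ] unfolding diag_convex_def by blast
    have jQ: "(j, n-j) \<in> Q" using inQ[OF jR] dn by (simp add: diag_def)
    have "reach_in Q x0 (j, n-j)"
    proof (cases "n = m - 1")
      case False
      then have "n \<le> m - 2" using dn by simp
      then show ?thesis using CL[OF x0 jR] by (simp add: diag_def)
    next
      case True
      have ri: "reach_in Q x0 (i, n-i)" and rk: "reach_in Q x0 (k, n-k)" using h C0_def by auto
      have di: "diag (i, n-i) = m - 1" and dk: "diag (k, n-k) = m - 1" using True by (auto simp: diag_def)
      obtain wi where wi: "wi\<in>R" "diag wi = m-2" "edge_adj (i, n-i) wi" using nbr[OF ri x0(2) di] by blast
      obtain wk where wk: "wk\<in>R" "diag wk = m-2" "edge_adj (k, n-k) wk" using nbr[OF rk x0(2) dk] by blast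
      have ik: "fst (i, n-i) \<le> fst (k, n-k)" using h(3,4) by simp
      have "\<forall>j'. i \<le> j' \<and> j' \<le> k \<longrightarrow> reach_in Q (i, n-i) (j', m-1-j')"
        using zig[OF QR[OF iQ, THEN conjunct1] di wi QR[OF kQ, THEN conjunct1] dk wk ik] by simp
      then have "reach_in Q (i, n-i) (j, n-j)" using h(3,4) True by auto
      then show ?thesis using ri reach_trans by blast
    qed
    then show "(j, n - j) \<in> C0" using jQ C0_def by simp
  qed
  have P2: "\<forall>C. is_component Q C \<and> num_diagonals C \<ge> 2 \<longrightarrow> polyomino C \<and> diag_convex C"
    using comp_cases single polyC0 convC0 by blast
  have P3: "\<forall>C. is_component Q C \<and> \<not> num_diagonals C \<ge> 2 \<longrightarrow> (\<exists>c. C = {c} \<and> diag c = m - 1)"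
    using comp_cases ndC0 by blast
  show ?thesis using P1 P2 P3 by blast
qed

end

theorem mainTheorem3:
  fixes R :: "cell set" and m :: int and Q :: "cell set"
  assumes "polyomino R" and "diag_convex R" and "num_diagonals R \<ge> 3"
    and "m = Max (diag ` R)"
    and "Q = {c \<in> R. diag c \<noteq> m}"
  shows "(\<exists>!C. is_component Q C \<and> num_diagonals C \<ge> 2)
    \<and> (\<forall>C. is_component Q C \<and> num_diagonals C \<ge> 2 \<longrightarrow> polyomino C \<and> diag_convex C)
    \<and> (\<forall>C. is_component Q C \<and> \<not> num_diagonals C \<ge> 2 \<longrightarrow> (\<exists>c. C = {c} \<and> diag c = m - 1))"
proof -
  interpret dc R m Q using assms by unfold_locales
  show ?thesis using result assms(3) .
qed

end
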